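(* Let $(A,\circ,\cap,\sqcup)$ be a right normal band with intersection and override, and define $a\diamond b=a\circ(b\sqcup a)$. If $F$ is a filter of $(A,\circ)$ such that $a\sqcup b\in F$ implies $a\in F$ or $b\in F$ (a prime filter), then $F$ is weakly prime: whenever $a\in F$ and $b\in A$, either $b\in F$ or $a\cap(a\diamond b)\in F$.
   Context: A right normal band with intersection and override $(A,\circ,\cap,\sqcup)$: $(A,\circ)$ a semigroup with $x\circ x=x$, $(x\circ y)\circ z=(y\circ x)\circ z$; $(A,\cap)$ a semilattice; $(x\cap y)\circ x=x\cap y$; $x\circ(y\cap z)=(x\circ y)\cap z$; $s\circ(s\sqcup t)=s$; $((s\sqcup t)\cap t)\sqcup s=s\sqcup t$; $(s\sqcup t)\circ u=(s\circ u)\sqcup(t\circ u)$. Define $f\lesssim g$ iff $g\circ f=f$. A filter of $(A,\circ)$ is a non-empty $F\subseteq A$ closed under $\circ$ with $a\in F$, $a\lesssim b\Rightarrow b\in F$. *)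

theory Defs
  imports Main
begin

definition rnb_io :: "'a set \<Rightarrow> ('a \<Rightarrow> 'a \<Rightarrow> 'a) \<Rightarrow> ('a \<Rightarrow> 'a \<Rightarrow> 'a) \<Rightarrow> ('a \<Rightarrow> 'a \<Rightarrow> 'a) \<Rightarrow> bool" where
  "rnb_io A c i ov \<longleftrightarrow>
     (\<forall>x\<in>A. \<forall>y\<in>A. c x y \<in> A \<and> i x y \<in> A \<and> ov x y \<in> A) \<and>
     (\<forall>x\<in>A. \<forall>y\<in>A. \<forall>z\<in>A. c (c x y) z = c x (c y z)) \<and>
     (\<forall>x\<in>A. c x x = x) \<and>
     (\<forall>x\<in>A. \<forall>y\<in>A. \<forall>z\<in>A. c (c x y) z = c (c y x) z) \<and>
     (\<forall>x\<in>A. \<forall>y\<in>A. \<forall>z\<in>A. i (i x y) z = i x (i y z)) \<and>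
     (\<forall>x\<in>A. \<forall>y\<in>A. i x y = i y x) \<and>
     (\<forall>x\<in>A. i x x = x) \<and>
     (\<forall>x\<in>A. \<forall>y\<in>A. c (i x y) x = i x y) \<and>
     (\<forall>x\<in>A. \<forall>y\<in>A. \<forall>z\<in>A. c x (i y z) = i (c x y) z) \<and>
     (\<forall>s\<in>A. \<forall>t\<in>A. c s (ov s t) = s) \<and>
     (\<forall>s\<in>A. \<forall>t\<in>A. ov (i (ov s t) t) s = ov s t) \<and>
     (\<forall>s\<in>A. \<forall>t\<in>A. \<forall>u\<in>A. c (ov s t) u = ov (c s u) (c t u))"

definition rnb_le :: "('a \<Rightarrow> 'a \<Rightarrow> 'a) \<Rightarrow> 'a \<Rightarrow> 'a \<Rightarrow> bool" where
  "rnb_le c f g \<longleftrightarrow> c g f = f"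

definition rnb_filter :: "'a set \<Rightarrow> ('a \<Rightarrow> 'a \<Rightarrow> 'a) \<Rightarrow> 'a set \<Rightarrow> bool" where
  "rnb_filter A c F \<longleftrightarrow> F \<noteq> {} \<and> F \<subseteq> A \<and>
     (\<forall>a\<in>F. \<forall>b\<in>F. c a b \<in> F) \<and>
     (\<forall>a\<in>F. \<forall>b\<in>A. rnb_le c a b \<longrightarrow> b \<in> F)"

definition diamond :: "('a \<Rightarrow> 'a \<Rightarrow> 'a) \<Rightarrow> ('a \<Rightarrow> 'a \<Rightarrow> 'a) \<Rightarrow> 'a \<Rightarrow> 'a \<Rightarrow> 'a" where
  "diamond c ov a b = c a (ov b a)"

end

theory Submission
  imports Defs
begin

lemma rnb_L:
  assumes "rnb_io A c i ov" "x \<in> A" "a \<in> A"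
  shows "ov (c x a) a = a"
proof -
  have cl: "\<And>x y. x \<in> A \<Longrightarrow> y \<in> A \<Longrightarrow> c x y \<in> A"
    "\<And>x y. x \<in> A \<Longrightarrow> y \<in> A \<Longrightarrow> i x y \<in> A"
    "\<And>x y. x \<in> A \<Longrightarrow> y \<in> A \<Longrightarrow> ov x y \<in> A"
    using assms(1) unfolding rnb_io_def by auto
  have rn: "\<And>x y z. x \<in> A \<Longrightarrow> y \<in> A \<Longrightarrow> z \<in> A \<Longrightarrow> c (c x y) z = c (c y x) z"
    and ic: "\<And>x y. x \<in> A \<Longrightarrow> y \<in> A \<Longrightarrow> i x y = i y x"
    and ii: "\<And>x. x \<in> A \<Longrightarrow> i x x = x"
    and ci: "\<And>x y. x \<in> A \<Longrightarrow> y \<in> A \<Longrightarrow> c (i x y) x = i x y"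
    and cii: "\<And>x y z. x \<in> A \<Longrightarrow> y \<in> A \<Longrightarrow> z \<in> A \<Longrightarrow> c x (i y z) = i (c x y) z"
    and o1: "\<And>s t. s \<in> A \<Longrightarrow> t \<in> A \<Longrightarrow> c s (ov s t) = s"
    and o2: "\<And>s t. s \<in> A \<Longrightarrow> t \<in> A \<Longrightarrow> ov (i (ov s t) t) s = ov s t"
    and o3: "\<And>s t u. s \<in> A \<Longrightarrow> t \<in> A \<Longrightarrow> u \<in> A \<Longrightarrow> c (ov s t) u = ov (c s u) (c t u)"
    using assms(1) unfolding rnb_io_def by auto
  show ?thesis
    using assms(2,3) cl rn ic ii ci cii o1 o2 o3 by metis
qed

theorem proposition3p18:
  assumes "rnb_io A c i ov"
    and "rnb_filter A c F"
    and prime: "\<forall>a\<in>A. \<forall>b\<in>A. ov a b \<in> F \<longrightarrow> a \<in> F \<or> b \<in> F"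
    and "a \<in> F" and "b \<in> A"
  shows "b \<in> F \<or> i a (diamond c ov a b) \<in> F"
proof -
  have cl: "\<And>x y. x \<in> A \<Longrightarrow> y \<in> A \<Longrightarrow> c x y \<in> A"
    "\<And>x y. x \<in> A \<Longrightarrow> y \<in> A \<Longrightarrow> i x y \<in> A"
    "\<And>x y. x \<in> A \<Longrightarrow> y \<in> A \<Longrightarrow> ov x y \<in> A"
    using assms(1) unfolding rnb_io_def by auto
  have as: "\<And>x y z. x \<in> A \<Longrightarrow> y \<in> A \<Longrightarrow> z \<in> A \<Longrightarrow> c (c x y) z = c x (c y z)"
    and idm: "\<And>x. x \<in> A \<Longrightarrow> c x x = x"
    and ic: "\<And>x y. x \<in> A \<Longrightarrow> y \<in> A \<Longrightarrow> i x y = i y x"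
    and ci: "\<And>x y. x \<in> A \<Longrightarrow> y \<in> A \<Longrightarrow> c (i x y) x = i x y"
    and cii: "\<And>x y z. x \<in> A \<Longrightarrow> y \<in> A \<Longrightarrow> z \<in> A \<Longrightarrow> c x (i y z) = i (c x y) z"
    and o2: "\<And>s t. s \<in> A \<Longrightarrow> t \<in> A \<Longrightarrow> ov (i (ov s t) t) s = ov s t"
    and o3: "\<And>s t u. s \<in> A \<Longrightarrow> t \<in> A \<Longrightarrow> u \<in> A \<Longrightarrow> c (ov s t) u = ov (c s u) (c t u)"
    using assms(1) unfolding rnb_io_def by auto
  have FA: "F \<subseteq> A" and Fc: "\<And>x y. x \<in> F \<Longrightarrow> y \<in> F \<Longrightarrow> c x y \<in> F"
    and Fu: "\<And>x y. x \<in> F \<Longrightarrow> y \<in> A \<Longrightarrow> c y x = x \<Longrightarrow> y \<in> F"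
    using assms(2) unfolding rnb_filter_def rnb_le_def by auto
  have aA: "a \<in> A" using assms(4) FA by auto
  note bA = assms(5)
  define M where "M = i (ov b a) a"
  have MA: "M \<in> A" unfolding M_def using cl aA bA by auto
  have 1: "c (ov b a) a = a"
    using o3[OF bA aA aA] idm[OF aA] rnb_L[OF assms(1) bA aA] by simp
  have 2: "ov M b = ov b a" unfolding M_def using o2[OF bA aA] .
  have 4: "c M a = M"
    unfolding M_def using ic[OF cl(3)[OF bA aA] aA] ci[OF aA cl(3)[OF bA aA]] by simp
  have 3: "ov M (c b a) = a"
    using o3[OF MA bA aA] 2 1 4 by simp
  have "M \<in> F \<or> c b a \<in> F"
    using prime MA cl(1)[OF bA aA] 3 assms(4) by metis
  then show ?thesis
  proof
    assume "c b a \<in> F"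
    moreover have "c b (c b a) = c b a" using as[OF bA bA aA] idm[OF bA] by simp
    ultimately have "b \<in> F" using Fu bA by blast
    then show ?thesis by simp
  next
    assume "M \<in> F"
    then have "c a M \<in> F" using Fc assms(4) by blast
    moreover have "c a M = i a (diamond c ov a b)"
      unfolding M_def diamond_def
      using cii[OF aA cl(3)[OF bA aA] aA] ic[OF cl(1)[OF aA cl(3)[OF bA aA]] aA] by simp
    ultimately show ?thesis by simp
  qed
qed

end
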